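(* Let $A$ be a countable non-empty set of players, $\mathbf{n}\notin A$ an additional "nature" position owner, $C$ a finite non-empty set of choices, $d:C^*\to A\cup\{\mathbf{n}\}$, $P$ a function assigning to every $w\in d^{-1}(\{\mathbf{n}\})$ a probability distribution $P(w)$ on $C$, and for every $a\in A$ let $f_a:C^\omega\to[0,1]$ be continuous (product of discrete topologies on $C^\omega$). Then the stochastic infinite sequential game $\langle A,C,d,(f_a)_{a\in A},P\rangle$ has a subgame perfect equilibrium.
   Context: A strategy of player $a\in A$ is a function $s_a:d^{-1}(\{a\})\to C$; a strategy profile is a family of strategies, one per player. Given a profile $\sigma$ and a history $\gamma\in C^*$, the induced probability distribution on plays in $\gamma C^\omega$ is obtained by following $\gamma$, then at each history $w$ with $d(w)=a\in A$ choosing $\sigma_a(w)$, and at each history $w$ with $d(w)=\mathbf{n}$ choosing the next element at random according to $P(w)$ (independently). The payoff of player $a$ from $\gamma$ under $\sigma$ is the expected value of $f_a$ under this distribution. A profile $\sigma$ is a subgame perfect equilibrium if for no $\gamma\in C^*$, player $a$ and strategy $s_a$ of $a$ does replacing $\sigma_a$ by $s_a$ strictly increase the expected payoff of $a$ from $\gamma$. *)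

theory Defs
  imports "HOL-Probability.Probability"
begin

(* Conventions:
   - choices C = the finite (nonempty) type 'c; histories C* = 'c list; plays C^omega = nat => 'c
   - position owners A + {nature} = 'a option, with None = nature n and Some a = player a ('a countable)
   - d :: 'c list => 'a option
   - P :: 'c list => 'c pmf  (only the values at nature positions matter)
   - a strategy profile is sigma :: 'a => 'c list => 'c (only values on d^-1({Some a}) matter)
   Randomness: an independent draw X w ~ P w for every history w (product measure on
   'c list => 'c).  Since every history is visited at most once along a play, the induced
   distribution on plays is exactly the one described in the paper. *)

definition next_move ::
  "('c list \<Rightarrow> 'a option) \<Rightarrow> ('a \<Rightarrow> 'c list \<Rightarrow> 'c) \<Rightarrow> ('c list \<Rightarrow> 'c) \<Rightarrow> 'c list \<Rightarrow> 'c" where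
  "next_move d \<sigma> X w = (case d w of None \<Rightarrow> X w | Some a \<Rightarrow> \<sigma> a w)"

primrec hist ::
  "('c list \<Rightarrow> 'a option) \<Rightarrow> ('a \<Rightarrow> 'c list \<Rightarrow> 'c) \<Rightarrow> 'c list \<Rightarrow> ('c list \<Rightarrow> 'c) \<Rightarrow> nat \<Rightarrow> 'c list" where
  "hist d \<sigma> \<gamma> X 0 = \<gamma>"
| "hist d \<sigma> \<gamma> X (Suc k) = hist d \<sigma> \<gamma> X k @ [next_move d \<sigma> X (hist d \<sigma> \<gamma> X k)]"

definition play ::
  "('c list \<Rightarrow> 'a option) \<Rightarrow> ('a \<Rightarrow> 'c list \<Rightarrow> 'c) \<Rightarrow> 'c list \<Rightarrow> ('c list \<Rightarrow> 'c) \<Rightarrow> nat \<Rightarrow> 'c" where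
  "play d \<sigma> \<gamma> X n = hist d \<sigma> \<gamma> X (Suc n) ! n"

definition nature_measure :: "('c list \<Rightarrow> 'c pmf) \<Rightarrow> ('c list \<Rightarrow> 'c) measure" where
  "nature_measure P = (\<Pi>\<^sub>M w\<in>UNIV. measure_pmf (P w))"

definition payoff ::
  "('c list \<Rightarrow> 'a option) \<Rightarrow> ('c list \<Rightarrow> 'c pmf) \<Rightarrow> ('a \<Rightarrow> (nat \<Rightarrow> 'c) \<Rightarrow> real)
    \<Rightarrow> ('a \<Rightarrow> 'c list \<Rightarrow> 'c) \<Rightarrow> 'c list \<Rightarrow> 'a \<Rightarrow> real" where
  "payoff d P f \<sigma> \<gamma> a = (\<integral>X. f a (play d \<sigma> \<gamma> X) \<partial>nature_measure P)"

definition subgame_perfect ::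
  "('c list \<Rightarrow> 'a option) \<Rightarrow> ('c list \<Rightarrow> 'c pmf) \<Rightarrow> ('a \<Rightarrow> (nat \<Rightarrow> 'c) \<Rightarrow> real)
    \<Rightarrow> ('a \<Rightarrow> 'c list \<Rightarrow> 'c) \<Rightarrow> bool" where
  "subgame_perfect d P f \<sigma> \<longleftrightarrow>
     (\<forall>\<gamma> a s. \<not> (payoff d P f (\<sigma>(a := s)) \<gamma> a > payoff d P f \<sigma> \<gamma> a))"

definition plays_topology :: "(nat \<Rightarrow> 'c) topology" where
  "plays_topology = product_topology (\<lambda>_. discrete_topology UNIV) UNIV"

end

theory Submission imports Defs begin

lemma length_hist[simp]: "length (hist d \<sigma> \<gamma> X k) = length \<gamma> + k"
  by (induction k) auto

lemma hist_shift: "hist d \<sigma> \<gamma> X (Suc k) = hist d \<sigma> (\<gamma> @ [next_move d \<sigma> X \<gamma>]) X k"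
  by (induction k) auto

lemma hist_prefix: "m \<le> k \<Longrightarrow> n < length \<gamma> + m \<Longrightarrow> hist d \<sigma> \<gamma> X k ! n = hist d \<sigma> \<gamma> X m ! n"
proof (induction k)
  case 0 then show ?case by simp
next
  case (Suc k)
  show ?case
  proof (cases "m = Suc k")
    case False
    then have "m \<le> k" using Suc by simp
    then show ?thesis using Suc by (simp add: nth_append)
  qed simp
qed

lemma hist_nth: "n < length \<gamma> + m \<Longrightarrow> n < length \<gamma> + k \<Longrightarrow> hist d \<sigma> \<gamma> X k ! n = hist d \<sigma> \<gamma> X m ! n"
  by (metis hist_prefix nat_le_linear)

lemma play_hist: "n < length \<gamma> + k \<Longrightarrow> play d \<sigma> \<gamma> X n = hist d \<sigma> \<gamma> X k ! n"
  unfolding play_def by (rule hist_nth) auto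

lemma play_prefix: "n < length \<gamma> \<Longrightarrow> play d \<sigma> \<gamma> X n = \<gamma> ! n"
  using play_hist[of n \<gamma> 0] by simp

lemma play_shift: "play d \<sigma> \<gamma> X = play d \<sigma> (\<gamma> @ [next_move d \<sigma> X \<gamma>]) X"
proof
  fix n
  have "play d \<sigma> (\<gamma> @ [next_move d \<sigma> X \<gamma>]) X n = hist d \<sigma> \<gamma> X (Suc (Suc n)) ! n"
    unfolding play_def hist_shift[symmetric] ..
  also have "\<dots> = play d \<sigma> \<gamma> X n" by (rule play_hist[symmetric]) simp
  finally show "play d \<sigma> \<gamma> X n = play d \<sigma> (\<gamma> @ [next_move d \<sigma> X \<gamma>]) X n" ..
qed

lemma hist_cong:
  assumes "\<And>w. length \<gamma> \<le> length w \<Longrightarrow> length w < length \<gamma> + k \<Longrightarrow> next_move d \<sigma> X w = next_move d \<tau> Y w"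
  shows "hist d \<sigma> \<gamma> X k = hist d \<tau> \<gamma> Y k"
  using assms by (induction k) auto

lemma play_cong:
  assumes "\<And>w. length \<gamma> \<le> length w \<Longrightarrow> length w < N \<Longrightarrow> next_move d \<sigma> X w = next_move d \<tau> Y w"
    and "n < N"
  shows "play d \<sigma> \<gamma> X n = play d \<tau> \<gamma> Y n"
proof -
  have "hist d \<sigma> \<gamma> X (N - length \<gamma>) = hist d \<tau> \<gamma> Y (N - length \<gamma>)"
    by (rule hist_cong) (use assms in auto)
  moreover have "n < length \<gamma> + (N - length \<gamma>)" using assms by simp
  ultimately show ?thesis by (simp add: play_hist)
qed


section \<open>Topology of plays\<close>

lemma topspace_plays[simp]: "topspace plays_topology = UNIV"
  by (simp add: plays_topology_def)

lemma plays_compact: "compact_space (plays_topology :: (nat \<Rightarrow> 'c::finite) topology)"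
  unfolding plays_topology_def by (simp add: compact_space_product_topology compact_space_discrete_topology)

lemma cyl_open: "openin plays_topology {y. \<forall>i<n. y i = x i}"
proof -
  have eq: "{y. \<forall>i<n. y i = x i} = PiE UNIV (\<lambda>i. if i < n then {x i} else UNIV)"
    by (auto simp: PiE_iff split: if_splits)
  have fin: "finite {i. (if i < n then {x i} else UNIV) \<noteq> UNIV}"
    by (rule finite_subset[of _ "{..<n}"]) auto
  have "openin (discrete_topology UNIV) (if i < n then {x i} else UNIV)" for i
    by simp
  then show ?thesis unfolding eq plays_topology_def
    apply (subst openin_PiE_gen)
    using fin by simp
qed

lemma uc:
  fixes g :: "(nat \<Rightarrow> 'c::finite) \<Rightarrow> real"
  assumes g: "continuous_map plays_topology euclideanreal g" and e: "e > 0"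
  shows "\<exists>N. \<forall>x y. (\<forall>i<N. x i = y i) \<longrightarrow> \<bar>g x - g y\<bar> < e"
proof -
  have "\<forall>x. \<exists>n. {y. \<forall>i<n. y i = x i} \<subseteq> {y. \<bar>g y - g x\<bar> < e/2}"
  proof
    fix x :: "nat \<Rightarrow> 'c"
    have "openin plays_topology {y \<in> topspace plays_topology. g y \<in> ball (g x) (e/2)}"
      by (rule openin_continuous_map_preimage[OF g]) (simp add: open_openin[symmetric])
    moreover have "{y \<in> topspace plays_topology. g y \<in> ball (g x) (e/2)} = {y. \<bar>g y - g x\<bar> < e/2}"
      by (auto simp: dist_real_def abs_minus_commute)
    ultimately have op: "openin plays_topology {y. \<bar>g y - g x\<bar> < e/2}" by simp
    have xin: "x \<in> {y. \<bar>g y - g x\<bar> < e/2}" using e by simp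
    have "\<exists>U. finite {i \<in> UNIV. U i \<noteq> topspace (discrete_topology UNIV)} \<and>
                 (\<forall>i \<in> UNIV. openin (discrete_topology UNIV) (U i)) \<and> x \<in> Pi\<^sub>E UNIV U \<and> Pi\<^sub>E UNIV U \<subseteq> {y. \<bar>g y - g x\<bar> < e/2}"
      using op[unfolded plays_topology_def openin_product_topology_alt] xin by (rule bspec)
    then obtain U where U0: "finite {i \<in> UNIV. U i \<noteq> topspace (discrete_topology UNIV)}" "x \<in> PiE UNIV U"
        "PiE UNIV U \<subseteq> {y. \<bar>g y - g x\<bar> < e/2}"
      by (elim exE conjE) (rule that)
    have U: "finite {i. U i \<noteq> UNIV}" "x \<in> PiE UNIV U" "PiE UNIV U \<subseteq> {y. \<bar>g y - g x\<bar> < e/2}"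
      using U0 by simp_all
    define n where "n = Suc (Max (insert 0 {i. U i \<noteq> UNIV}))"
    have "{y. \<forall>i<n. y i = x i} \<subseteq> PiE UNIV U"
    proof
      fix y assume y: "y \<in> {y. \<forall>i<n. y i = x i}"
      have "y i \<in> U i" for i
      proof (cases "U i = UNIV")
        case False
        then have "i \<le> Max (insert 0 {i. U i \<noteq> UNIV})" using U(1) by (intro Max_ge) auto
        then have "i < n" unfolding n_def by simp
        then show ?thesis using y U(2) by (auto simp: PiE_iff)
      qed simp
      then show "y \<in> PiE UNIV U" by (auto simp: PiE_iff)
    qed
    then have "{y. \<forall>i<n. y i = x i} \<subseteq> {y. \<bar>g y - g x\<bar> < e/2}" using U(3) by (rule subset_trans)
    then show "\<exists>n. {y. \<forall>i<n. y i = x i} \<subseteq> {y. \<bar>g y - g x\<bar> < e/2}" by (rule exI)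
  qed
  then have "\<exists>nx. \<forall>x. {y. \<forall>i<nx x. y i = x i} \<subseteq> {y. \<bar>g y - g x\<bar> < e/2}" by (rule choice)
  then obtain nx where nx': "\<forall>x. {y. \<forall>i<nx x. y i = x i} \<subseteq> {y. \<bar>g y - g x\<bar> < e/2}" by (rule exE)
  note nx = nx'[rule_format]
  let ?C = "\<lambda>x. {y. \<forall>i<nx x. y i = (x::nat \<Rightarrow> 'c) i}"
  have "\<exists>\<F>. finite \<F> \<and> \<F> \<subseteq> range ?C \<and> topspace plays_topology \<subseteq> \<Union>\<F>"
  proof -
    have a1: "\<forall>U\<in>range ?C. openin plays_topology U" using cyl_open by blast
    have "x \<in> ?C x" for x by simp
    then have a2: "topspace plays_topology \<subseteq> \<Union> (range ?C)" by blast
    from plays_compact[unfolded compact_space_alt]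
    have "(\<forall>U\<in>range ?C. openin plays_topology U) \<and> topspace plays_topology \<subseteq> \<Union> (range ?C) \<longrightarrow>
      (\<exists>\<F>. finite \<F> \<and> \<F> \<subseteq> range ?C \<and> topspace plays_topology \<subseteq> \<Union>\<F>)" by (rule spec)
    then show ?thesis using a1 a2 by blast
  qed
  then obtain \<F> where F: "finite \<F>" "\<F> \<subseteq> range ?C" "topspace plays_topology \<subseteq> \<Union>\<F>" by (elim exE conjE) (rule that)
  obtain B where B: "finite B" "\<F> = ?C ` B"
    using finite_subset_image[OF F(1) F(2)] by (elim exE conjE) (rule that)
  define N where "N = Max (insert 0 (nx ` B))"
  show ?thesis
  proof (intro exI allI impI)
    fix y z :: "nat \<Rightarrow> 'c" assume yz: "\<forall>i<N. y i = z i"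
    obtain x where x: "x \<in> B" "y \<in> ?C x" using F(3) B(2) by auto
    have "nx x \<le> N" unfolding N_def using B(1) x(1) by (intro Max_ge) auto
    then have "z \<in> ?C x" using x(2) yz by auto
    then have "\<bar>g z - g x\<bar> < e/2" "\<bar>g y - g x\<bar> < e/2" using nx x(2) by blast+
    then show "\<bar>g y - g z\<bar> < e" by linarith
  qed
qed


section \<open>Measurability\<close>

lemma space_nature[simp]: "space (nature_measure P) = UNIV"
  by (simp add: nature_measure_def space_PiM)

lemma prob_nature: "prob_space (nature_measure P)"
  unfolding nature_measure_def by (rule prob_space_PiM) (simp add: prob_space_measure_pmf)

lemma meas_coord: "(\<lambda>X. X w) \<in> measurable (nature_measure P) (count_space UNIV)"
proof -
  have "measurable (nature_measure P) (measure_pmf (P w)) = measurable (nature_measure P) (count_space UNIV)"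
    by (rule measurable_cong_sets) simp_all
  moreover have "(\<lambda>X. X w) \<in> measurable (nature_measure P) (measure_pmf (P w))"
    unfolding nature_measure_def by (rule measurable_component_singleton) simp
  ultimately show ?thesis by simp
qed

lemma meas_next: "(\<lambda>X. next_move d \<sigma> X w) \<in> measurable (nature_measure P) (count_space UNIV)"
  unfolding next_move_def by (cases "d w") (auto intro: meas_coord)

lemma meas_hist:
  fixes d :: "'c::countable list \<Rightarrow> 'a option"
  shows "(\<lambda>X. hist d \<sigma> \<gamma> X k) \<in> measurable (nature_measure P) (count_space UNIV)"
proof (induction k)
  case 0 then show ?case by simp
next
  case (Suc k)
  have "(\<lambda>X. (\<lambda>l X. l @ [next_move d \<sigma> X l]) (hist d \<sigma> \<gamma> X k) X) \<in> measurable (nature_measure P) (count_space UNIV)"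
  proof (rule measurable_compose_countable'[OF _ Suc])
    fix l :: "'c list"
    show "(\<lambda>X. l @ [next_move d \<sigma> X l]) \<in> measurable (nature_measure P) (count_space UNIV)"
      using measurable_comp[OF meas_next measurable_count_space, where g="\<lambda>c. l @ [c]"]
      by (simp add: comp_def)
  qed simp
  then show ?case by simp
qed

lemma meas_integrand:
  fixes d :: "'c::finite list \<Rightarrow> 'a option"
  assumes g: "continuous_map plays_topology euclideanreal g"
  shows "(\<lambda>X. g (play d \<sigma> \<gamma> X)) \<in> borel_measurable (nature_measure P)"
proof (rule borel_measurable_LIMSEQ_real)
  define u where "u N X = (\<lambda>l. g (\<lambda>n. if n < N then l ! n else undefined)) (hist d \<sigma> \<gamma> X N)" for N X
  show "u N \<in> borel_measurable (nature_measure P)" for N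
    unfolding u_def by (rule measurable_comp[OF meas_hist borel_measurable_count_space, unfolded comp_def])
  fix X
  show "(\<lambda>N. u N X) \<longlonglongrightarrow> g (play d \<sigma> \<gamma> X)"
  proof (rule LIMSEQ_I)
    fix r :: real assume r: "0 < r"
    obtain N0 where N0: "\<forall>x y. (\<forall>i<N0. x i = y i) \<longrightarrow> \<bar>g x - g y\<bar> < r"
      using uc[OF g r] by blast
    have "\<bar>u N X - g (play d \<sigma> \<gamma> X)\<bar> < r" if "N \<ge> N0" for N
    proof -
      have h: "hist d \<sigma> \<gamma> X N ! i = play d \<sigma> \<gamma> X i" if "i < N" for i
        using play_hist[of i \<gamma> N d \<sigma> X] that by simp
      have "\<forall>i<N0. (\<lambda>n. if n < N then hist d \<sigma> \<gamma> X N ! n else undefined) i = play d \<sigma> \<gamma> X i"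
        using that h by simp
      moreover have "(\<forall>i<N0. (\<lambda>n. if n < N then hist d \<sigma> \<gamma> X N ! n else undefined) i = play d \<sigma> \<gamma> X i) \<longrightarrow>
         \<bar>g (\<lambda>n. if n < N then hist d \<sigma> \<gamma> X N ! n else undefined) - g (play d \<sigma> \<gamma> X)\<bar> < r"
        by (rule spec[OF spec[OF N0]])
      ultimately show ?thesis unfolding u_def by (rule rev_mp)
    qed
    then show "\<exists>no. \<forall>N\<ge>no. norm (u N X - g (play d \<sigma> \<gamma> X)) < r" by auto
  qed
qed

lemma integrable_integrand:
  fixes d :: "'c::finite list \<Rightarrow> 'a option"
  assumes g: "continuous_map plays_topology euclideanreal g" and b: "\<And>x. g x \<in> {0..1}"
  shows "integrable (nature_measure P) (\<lambda>X. g (play d \<sigma> \<gamma> X))"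
proof -
  interpret prob_space "nature_measure P" by (rule prob_nature)
  show ?thesis
  proof (rule integrable_const_bound[where B=1])
    show "AE x in nature_measure P. norm (g (play d \<sigma> \<gamma> x)) \<le> 1"
    proof (rule AE_I2)
      fix x
      have "g (play d \<sigma> \<gamma> x) \<in> {0..1}" by (rule b)
      then show "norm (g (play d \<sigma> \<gamma> x)) \<le> 1" by simp
    qed
  qed (rule meas_integrand[OF g])
qed


section \<open>Payoff estimates and one-step decomposition\<close>

lemma payoff_close:
  fixes d :: "'c::finite list \<Rightarrow> 'a option"
  assumes g: "continuous_map plays_topology euclideanreal (f a)" and b: "\<And>x. f a x \<in> {0..1}"
    and close: "\<And>X. \<bar>f a (play d \<sigma> \<gamma> X) - f a (play d \<tau> \<gamma>' X)\<bar> \<le> e"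
  shows "\<bar>payoff d P f \<sigma> \<gamma> a - payoff d P f \<tau> \<gamma>' a\<bar> \<le> e"
proof -
  interpret prob_space "nature_measure P" by (rule prob_nature)
  have i1: "integrable (nature_measure P) (\<lambda>X. f a (play d \<sigma> \<gamma> X))" by (rule integrable_integrand[OF g b])
  have i2: "integrable (nature_measure P) (\<lambda>X. f a (play d \<tau> \<gamma>' X))" by (rule integrable_integrand[OF g b])
  have i3: "integrable (nature_measure P) (\<lambda>X. f a (play d \<sigma> \<gamma> X) - f a (play d \<tau> \<gamma>' X))"
    by (rule Bochner_Integration.integrable_diff[OF i1 i2])
  have eq: "payoff d P f \<sigma> \<gamma> a - payoff d P f \<tau> \<gamma>' a = (\<integral>X. f a (play d \<sigma> \<gamma> X) - f a (play d \<tau> \<gamma>' X) \<partial>nature_measure P)"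
    unfolding payoff_def by (rule Bochner_Integration.integral_diff[symmetric, OF i1 i2])
  have "(\<integral>X. f a (play d \<sigma> \<gamma> X) - f a (play d \<tau> \<gamma>' X) \<partial>nature_measure P) \<le> e"
  proof (rule integral_le_const[OF i3], rule AE_I2)
    fix X show "f a (play d \<sigma> \<gamma> X) - f a (play d \<tau> \<gamma>' X) \<le> e" using close[of X] by linarith
  qed
  moreover have "- e \<le> (\<integral>X. f a (play d \<sigma> \<gamma> X) - f a (play d \<tau> \<gamma>' X) \<partial>nature_measure P)"
  proof (rule integral_ge_const[OF i3], rule AE_I2)
    fix X show "- e \<le> f a (play d \<sigma> \<gamma> X) - f a (play d \<tau> \<gamma>' X)" using close[of X] by linarith
  qed
  ultimately show ?thesis unfolding eq by linarith
qed

lemma payoff_close_const: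
  fixes d :: "'c::finite list \<Rightarrow> 'a option"
  assumes g: "continuous_map plays_topology euclideanreal (f a)" and b: "\<And>x. f a x \<in> {0..1}"
    and close: "\<And>X. \<bar>f a (play d \<sigma> \<gamma> X) - c\<bar> \<le> e"
  shows "\<bar>payoff d P f \<sigma> \<gamma> a - c\<bar> \<le> e"
proof -
  interpret prob_space "nature_measure P" by (rule prob_nature)
  have i1: "integrable (nature_measure P) (\<lambda>X. f a (play d \<sigma> \<gamma> X))" by (rule integrable_integrand[OF g b])
  have "payoff d P f \<sigma> \<gamma> a \<le> c + e" unfolding payoff_def
  proof (rule integral_le_const[OF i1], rule AE_I2)
    fix X show "f a (play d \<sigma> \<gamma> X) \<le> c + e" using close[of X] by linarith
  qed
  moreover have "c - e \<le> payoff d P f \<sigma> \<gamma> a" unfolding payoff_def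
  proof (rule integral_ge_const[OF i1], rule AE_I2)
    fix X show "c - e \<le> f a (play d \<sigma> \<gamma> X)" using close[of X] by linarith
  qed
  ultimately show ?thesis by linarith
qed

lemma bellman_player:
  assumes "d \<gamma> = Some b"
  shows "payoff d P f \<sigma> \<gamma> a = payoff d P f \<sigma> (\<gamma> @ [\<sigma> b \<gamma>]) a"
proof -
  have "play d \<sigma> \<gamma> X = play d \<sigma> (\<gamma> @ [\<sigma> b \<gamma>]) X" for X
    by (subst play_shift) (simp add: next_move_def assms)
  then show ?thesis unfolding payoff_def by simp
qed

lemma play_indep:
  fixes X :: "'c list \<Rightarrow> 'c" and w :: "'c list"
  assumes "length w < length \<gamma>"
  shows "play d \<sigma> \<gamma> (X(w := c)) = play d \<sigma> \<gamma> X"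
proof -
  have "hist d \<sigma> \<gamma> (X(w := c)) k = hist d \<sigma> \<gamma> X k" for k
  proof (rule hist_cong)
    fix w' :: "'c list" assume "length \<gamma> \<le> length w'"
    then have "w' \<noteq> w" using assms by auto
    then show "next_move d \<sigma> (X(w := c)) w' = next_move d \<sigma> X w'"
      by (simp add: next_move_def split: option.split)
  qed
  then show ?thesis unfolding play_def by (simp del: hist.simps)
qed

lemma bellman_nature:
  fixes d :: "'c::finite list \<Rightarrow> 'a option"
  assumes g: "continuous_map plays_topology euclideanreal (f a)" and b: "\<And>x. f a x \<in> {0..1}"
    and dg: "d \<gamma> = None"
  shows "payoff d P f \<sigma> \<gamma> a = (\<integral>c. payoff d P f \<sigma> (\<gamma> @ [c]) a \<partial>measure_pmf (P \<gamma>))"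
proof -
  let ?M = "nature_measure P" and ?Q = "measure_pmf (P \<gamma>)"
  interpret Q: prob_space ?Q by (rule prob_space_measure_pmf)
  interpret Mp: prob_space ?M by (rule prob_nature)
  interpret pair_prob_space ?Q ?M ..
  define h where "h c X = f a (play d \<sigma> (\<gamma> @ [c]) X)" for c X
  have hX: "f a (play d \<sigma> \<gamma> X) = h (X \<gamma>) X" for X
    unfolding h_def by (subst play_shift) (simp add: next_move_def dg)
  have hind: "h c (X(\<gamma> := x)) = h c X" for c X x
    unfolding h_def by (subst play_indep) simp_all
  define u where "u p = (snd p)(\<gamma> := fst p)" for p :: "'c \<times> ('c list \<Rightarrow> 'c)"
  have distr: "distr (?Q \<Otimes>\<^sub>M ?M) ?M u = ?M"
    using distr_pair_PiM_eq_PiM[of UNIV "\<lambda>w. measure_pmf (P w)" \<gamma>]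
    unfolding nature_measure_def u_def by (simp add: prob_space_measure_pmf split_beta' insert_UNIV)
  have meas_u: "u \<in> measurable (?Q \<Otimes>\<^sub>M ?M) ?M"
    unfolding nature_measure_def u_def
    by (rule measurable_fun_upd[where J=UNIV]) (auto intro: measurable_snd[unfolded nature_measure_def] measurable_fst)
  have meas_fst: "fst \<in> measurable (?Q \<Otimes>\<^sub>M ?M) (count_space UNIV)"
  proof -
    have "measurable (?Q \<Otimes>\<^sub>M ?M) ?Q = measurable (?Q \<Otimes>\<^sub>M ?M) (count_space UNIV)"
      by (rule measurable_cong_sets) simp_all
    then show ?thesis using measurable_fst by blast
  qed
  have meas_h: "(\<lambda>p. h (fst p) (snd p)) \<in> borel_measurable (?Q \<Otimes>\<^sub>M ?M)"
  proof (rule measurable_compose_countable'[OF _ meas_fst])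
    fix i :: 'c
    show "(\<lambda>p. h i (snd p)) \<in> borel_measurable (?Q \<Otimes>\<^sub>M ?M)"
      unfolding h_def by (rule measurable_comp[OF measurable_snd meas_integrand[OF g], unfolded comp_def])
  qed simp
  have int_h: "integrable (?Q \<Otimes>\<^sub>M ?M) (\<lambda>p. h (fst p) (snd p))"
  proof (rule P.integrable_const_bound[where B=1])
    show "AE x in ?Q \<Otimes>\<^sub>M ?M. norm (h (fst x) (snd x)) \<le> 1"
    proof (rule AE_I2)
      fix x
      have "h (fst x) (snd x) \<in> {0..1}" unfolding h_def by (rule b)
      then show "norm (h (fst x) (snd x)) \<le> 1" by simp
    qed
  qed (rule meas_h)
  have "payoff d P f \<sigma> \<gamma> a = (\<integral>X. f a (play d \<sigma> \<gamma> X) \<partial>distr (?Q \<Otimes>\<^sub>M ?M) ?M u)"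
    unfolding payoff_def distr ..
  also have "\<dots> = (\<integral>p. f a (play d \<sigma> \<gamma> (u p)) \<partial>(?Q \<Otimes>\<^sub>M ?M))"
    by (rule integral_distr[OF meas_u meas_integrand[OF g]])
  also have "\<dots> = (\<integral>p. h (fst p) (snd p) \<partial>(?Q \<Otimes>\<^sub>M ?M))"
    by (simp add: hX u_def hind)
  also have "\<dots> = (\<integral>x. (\<integral>X. h x X \<partial>?M) \<partial>?Q)"
    using integral_fst'[OF int_h] by simp
  also have "\<dots> = (\<integral>c. payoff d P f \<sigma> (\<gamma> @ [c]) a \<partial>?Q)"
    unfolding payoff_def h_def ..
  finally show ?thesis .
qed


section \<open>Backward induction in the truncated game\<close>

definition ext :: "'c list \<Rightarrow> nat \<Rightarrow> 'c" where
  "ext w n = (if n < length w then w ! n else undefined)"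

primrec V :: "('a \<Rightarrow> (nat \<Rightarrow> 'c) \<Rightarrow> real) \<Rightarrow> ('c list \<Rightarrow> 'a option) \<Rightarrow> ('c list \<Rightarrow> 'c pmf)
    \<Rightarrow> nat \<Rightarrow> 'c list \<Rightarrow> 'a \<Rightarrow> real" where
  "V f d P 0 w a = f a (ext w)"
| "V f d P (Suc k) w a = (case d w of
      None \<Rightarrow> (\<integral>c. V f d P k (w @ [c]) a \<partial>measure_pmf (P w))
    | Some b \<Rightarrow> V f d P k (w @ [SOME c. \<forall>c'. V f d P k (w @ [c']) b \<le> V f d P k (w @ [c]) b]) a)"

definition best where
  "best f d P k w b = (SOME c. \<forall>c'. V f d P k (w @ [c']) b \<le> V f d P k (w @ [c]) b)"

lemma V_Suc_player: "d w = Some b \<Longrightarrow> V f d P (Suc k) w a = V f d P k (w @ [best f d P k w b]) a"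
  by (simp add: best_def)

lemma V_Suc_nature: "d w = None \<Longrightarrow> V f d P (Suc k) w a = (\<integral>c. V f d P k (w @ [c]) a \<partial>measure_pmf (P w))"
  by simp

lemma best_spec:
  fixes d :: "'c::finite list \<Rightarrow> 'a option"
  shows "V f d P k (w @ [c']) b \<le> V f d P k (w @ [best f d P k w b]) b"
proof -
  let ?g = "\<lambda>c. V f d P k (w @ [c]) b"
  have "Max (range ?g) \<in> range ?g" by (rule Max_in) auto
  then obtain c where c: "Max (range ?g) = ?g c" by (rule imageE)
  have "\<forall>c'. ?g c' \<le> ?g c" unfolding c[symmetric] by (auto intro: Max_ge)
  then have "\<exists>c. \<forall>c'. ?g c' \<le> ?g c" by blast
  from someI_ex[OF this] show ?thesis unfolding best_def by blast
qed

definition sigma0 where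
  "sigma0 f d P N b w = (if length w < N \<and> d w = Some b then best f d P (N - Suc (length w)) w b else undefined)"

lemma int_pmf_mono:
  fixes g h :: "'c::finite \<Rightarrow> real"
  assumes "\<And>c. g c \<le> h c"
  shows "(\<integral>c. g c \<partial>measure_pmf Q) \<le> (\<integral>c. h c \<partial>measure_pmf Q)"
  by (rule integral_mono) (auto simp: integrable_measure_pmf_finite assms)

lemma int_pmf_add_const:
  fixes g :: "'c::finite \<Rightarrow> real"
  shows "(\<integral>c. g c + e \<partial>measure_pmf Q) = (\<integral>c. g c \<partial>measure_pmf Q) + e"
  by (simp add: integrable_measure_pmf_finite Bochner_Integration.integral_add measure_pmf.prob_space)

context
  fixes d :: "'c::finite list \<Rightarrow> 'a option" and P :: "'c list \<Rightarrow> 'c pmf"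
    and f :: "'a \<Rightarrow> (nat \<Rightarrow> 'c) \<Rightarrow> real" and a :: 'a and N :: nat and e :: real
  assumes g: "continuous_map plays_topology euclideanreal (f a)" and b: "\<And>x. f a x \<in> {0..1}"
    and ucN: "\<forall>x y. (\<forall>i<N. x i = y i) \<longrightarrow> \<bar>f a x - f a y\<bar> \<le> e"
begin

lemma tail_close:
  assumes "N \<le> length w"
  shows "\<bar>payoff d P f \<tau> w a - f a (ext w)\<bar> \<le> e"
proof (rule payoff_close_const[where f=f and a=a, OF g b])
  fix X
  have "\<forall>i<N. play d \<tau> w X i = ext w i"
    using assms by (auto simp: play_prefix ext_def)
  moreover have "(\<forall>i<N. play d \<tau> w X i = ext w i) \<longrightarrow> \<bar>f a (play d \<tau> w X) - f a (ext w)\<bar> \<le> e"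
    by (rule spec[OF spec[OF ucN]])
  ultimately show "\<bar>f a (play d \<tau> w X) - f a (ext w)\<bar> \<le> e" by (rule rev_mp)
qed

lemma up_bound:
  "length w + k = N \<Longrightarrow> payoff d P f ((sigma0 f d P N)(a := s)) w a \<le> V f d P k w a + e"
proof (induction k arbitrary: w)
  case 0
  have "\<bar>payoff d P f ((sigma0 f d P N)(a := s)) w a - f a (ext w)\<bar> \<le> e"
    by (rule tail_close) (use 0 in simp)
  then show ?case unfolding V.simps by linarith
next
  case (Suc k)
  let ?\<tau> = "(sigma0 f d P N)(a := s)"
  have lt: "length w < N" and k: "N - Suc (length w) = k" using Suc.prems by auto
  show ?case
  proof (cases "d w")
    case None
    have "payoff d P f ?\<tau> w a = (\<integral>c. payoff d P f ?\<tau> (w @ [c]) a \<partial>measure_pmf (P w))"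
      by (rule bellman_nature[where f=f and a=a and d=d and \<gamma>=w and P=P, OF g b None])
    also have "\<dots> \<le> (\<integral>c. V f d P k (w @ [c]) a + e \<partial>measure_pmf (P w))"
      by (rule int_pmf_mono) (rule Suc.IH, use Suc.prems in simp)
    also have "\<dots> = V f d P (Suc k) w a + e"
      by (simp add: int_pmf_add_const None)
    finally show ?thesis .
  next
    case (Some b')
    show ?thesis
    proof (cases "b' = a")
      case True
      have "payoff d P f ?\<tau> w a = payoff d P f ?\<tau> (w @ [s w]) a"
        using bellman_player[where d=d and \<gamma>=w and P=P and f=f and \<sigma>="?\<tau>" and a=a, OF Some] True by simp
      also have "\<dots> \<le> V f d P k (w @ [s w]) a + e"
        by (rule Suc.IH) (use Suc.prems in simp)
      also have "\<dots> \<le> V f d P k (w @ [best f d P k w a]) a + e"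
        using best_spec[of f d P k w "s w" a] by simp
      also have "\<dots> = V f d P (Suc k) w a + e"
        using V_Suc_player[where d=d and w=w and f=f and P=P and k=k and a=a, OF Some] True by simp
      finally show ?thesis .
    next
      case False
      have "?\<tau> b' w = best f d P k w b'"
        using False Some lt k by (simp add: sigma0_def)
      then have "payoff d P f ?\<tau> w a = payoff d P f ?\<tau> (w @ [best f d P k w b']) a"
        using bellman_player[where d=d and \<gamma>=w and P=P and f=f and \<sigma>="?\<tau>" and a=a, OF Some] by simp
      also have "\<dots> \<le> V f d P k (w @ [best f d P k w b']) a + e"
        by (rule Suc.IH) (use Suc.prems in simp)
      also have "\<dots> = V f d P (Suc k) w a + e"
        using V_Suc_player[where d=d and w=w and f=f and P=P and k=k and a=a, OF Some] by simp
      finally show ?thesis .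
    qed
  qed
qed

lemma low_bound:
  "length w + k = N \<Longrightarrow> V f d P k w a - e \<le> payoff d P f (sigma0 f d P N) w a"
proof (induction k arbitrary: w)
  case 0
  have "\<bar>payoff d P f (sigma0 f d P N) w a - f a (ext w)\<bar> \<le> e"
    by (rule tail_close) (use 0 in simp)
  then show ?case unfolding V.simps by linarith
next
  case (Suc k)
  let ?\<tau> = "sigma0 f d P N"
  have lt: "length w < N" and k: "N - Suc (length w) = k" using Suc.prems by auto
  show ?case
  proof (cases "d w")
    case None
    have "V f d P (Suc k) w a - e = (\<integral>c. V f d P k (w @ [c]) a + (- e) \<partial>measure_pmf (P w))"
      using int_pmf_add_const[where g="\<lambda>c. V f d P k (w @ [c]) a" and e="- e" and Q="P w"] None by simp
    also have "\<dots> \<le> (\<integral>c. payoff d P f ?\<tau> (w @ [c]) a \<partial>measure_pmf (P w))"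
      by (rule int_pmf_mono) (use Suc.IH[of "w @ [_]"] Suc.prems in simp)
    also have "\<dots> = payoff d P f ?\<tau> w a"
      by (rule bellman_nature[where f=f and a=a and d=d and \<gamma>=w and P=P, OF g b None, symmetric])
    finally show ?thesis .
  next
    case (Some b')
    have "?\<tau> b' w = best f d P k w b'"
      using Some lt k by (simp add: sigma0_def)
    then have "payoff d P f ?\<tau> w a = payoff d P f ?\<tau> (w @ [best f d P k w b']) a"
      using bellman_player[where d=d and \<gamma>=w and P=P and f=f and \<sigma>="?\<tau>" and a=a, OF Some] by simp
    moreover have "V f d P k (w @ [best f d P k w b']) a - e \<le> payoff d P f ?\<tau> (w @ [best f d P k w b']) a"
      by (rule Suc.IH) (use Suc.prems in simp)
    moreover have "V f d P (Suc k) w a = V f d P k (w @ [best f d P k w b']) a"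
      using V_Suc_player[where d=d and w=w and f=f and P=P and k=k and a=a, OF Some] by simp
    ultimately show ?thesis by simp
  qed
qed

lemma approx_eq:
  "payoff d P f ((sigma0 f d P N)(a := s)) w a \<le> payoff d P f (sigma0 f d P N) w a + 2 * e"
proof (cases "length w \<le> N")
  case True
  then have "length w + (N - length w) = N" by simp
  from up_bound[OF this, of s] low_bound[OF this] show ?thesis by simp
next
  case False
  then have "N \<le> length w" by simp
  from tail_close[OF this, of "(sigma0 f d P N)(a := s)"] tail_close[OF this, of "sigma0 f d P N"]
  show ?thesis by linarith
qed

end


lemma exists_approx:
  fixes d :: "'c::finite list \<Rightarrow> 'a option" and P :: "'c list \<Rightarrow> 'c pmf"
    and f :: "'a \<Rightarrow> (nat \<Rightarrow> 'c) \<Rightarrow> real"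
  assumes cont: "\<And>a. continuous_map plays_topology euclideanreal (f a)"
    and bnd: "\<And>a x. f a x \<in> {0..1}" and F: "finite F" and ep: "\<epsilon> > 0"
  shows "\<exists>\<sigma>. \<forall>\<gamma>. \<forall>a\<in>F. \<forall>s. payoff d P f (\<sigma>(a := s)) \<gamma> a \<le> payoff d P f \<sigma> \<gamma> a + \<epsilon>"
proof -
  have "\<forall>a. \<exists>n. \<forall>x y. (\<forall>i<n. x i = y i) \<longrightarrow> \<bar>f a x - f a y\<bar> < \<epsilon>/2"
  proof
    fix a show "\<exists>n. \<forall>x y. (\<forall>i<n. x i = y i) \<longrightarrow> \<bar>f a x - f a y\<bar> < \<epsilon>/2"
      by (rule uc[OF cont]) (use ep in simp)
  qed
  then have "\<exists>Na. \<forall>a. \<forall>x y. (\<forall>i<Na a. x i = y i) \<longrightarrow> \<bar>f a x - f a y\<bar> < \<epsilon>/2" by (rule choice)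
  then obtain Na where Na: "\<forall>a. \<forall>x y. (\<forall>i<Na a. x i = y i) \<longrightarrow> \<bar>f a x - f a y\<bar> < \<epsilon>/2" by (rule exE)
  define N where "N = Max (insert 0 (Na ` F))"
  have ucN: "\<forall>x y. (\<forall>i<N. x i = y i) \<longrightarrow> \<bar>f a x - f a y\<bar> \<le> \<epsilon>/2" if aF: "a \<in> F" for a
  proof (intro allI impI)
    fix x y :: "nat \<Rightarrow> 'c" assume xy: "\<forall>i<N. x i = y i"
    have "Na a \<le> N" unfolding N_def using F aF by (intro Max_ge) auto
    then have "\<forall>i<Na a. x i = y i" using xy by simp
    moreover have "(\<forall>i<Na a. x i = y i) \<longrightarrow> \<bar>f a x - f a y\<bar> < \<epsilon>/2"
      by (rule spec[OF spec[OF spec[OF Na]]])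
    ultimately have "\<bar>f a x - f a y\<bar> < \<epsilon>/2" by (rule rev_mp)
    then show "\<bar>f a x - f a y\<bar> \<le> \<epsilon>/2" by simp
  qed
  show ?thesis
  proof (intro exI allI ballI)
    fix \<gamma> a s assume aF: "a \<in> F"
    from approx_eq[where f=f and a=a and d=d and P=P, OF cont bnd ucN[OF aF]]
    show "payoff d P f ((sigma0 f d P N)(a := s)) \<gamma> a \<le> payoff d P f (sigma0 f d P N) \<gamma> a + \<epsilon>"
      by simp
  qed
qed

section \<open>Compactness argument\<close>

definition ptop :: "('a \<Rightarrow> 'c list \<Rightarrow> 'c) topology" where
  "ptop = product_topology (\<lambda>_. product_topology (\<lambda>_. discrete_topology UNIV) UNIV) UNIV"

lemma topspace_ptop[simp]: "topspace ptop = UNIV"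
  by (simp add: ptop_def)

lemma ptop_compact: "compact_space (ptop :: ('a \<Rightarrow> 'c::finite list \<Rightarrow> 'c) topology)"
  unfolding ptop_def by (simp add: compact_space_product_topology compact_space_discrete_topology)

lemma nbhd_open:
  fixes d :: "'c::finite list \<Rightarrow> 'a option" and \<sigma>0 :: "'a \<Rightarrow> 'c list \<Rightarrow> 'c"
  shows "openin ptop {\<sigma>. \<forall>w b. length w < L \<longrightarrow> d w = Some b \<longrightarrow> \<sigma> b w = \<sigma>0 b w}"
proof -
  define S where "S b = PiE UNIV (\<lambda>w. if length w < L \<and> d w = Some b then {\<sigma>0 b w} else UNIV)" for b
  have eq: "{\<sigma>. \<forall>w b. length w < L \<longrightarrow> d w = Some b \<longrightarrow> \<sigma> b w = \<sigma>0 b w} = PiE UNIV S"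
    by (auto simp: S_def PiE_iff split: if_splits)
  have finW: "finite {w::'c list. length w < L}"
    by (rule finite_subset[OF _ finite_lists_length_le[of "UNIV :: 'c set" L]]) auto
  have inner: "openin (product_topology (\<lambda>_. discrete_topology UNIV) UNIV) (S b)" for b
  proof -
    have fin: "finite {w. (if length w < L \<and> d w = Some b then {\<sigma>0 b w} else UNIV) \<noteq> UNIV}"
      by (rule finite_subset[OF _ finW]) auto
    have "openin (discrete_topology UNIV) (if length w < L \<and> d w = Some b then {\<sigma>0 b w} else UNIV)" for w
      by simp
    then show ?thesis unfolding S_def
      apply (subst openin_PiE_gen)
      using fin by simp
  qed
  have finB: "finite {b. S b \<noteq> UNIV}"
  proof (rule finite_subset[OF _ finite_imageI[OF finW, of "\<lambda>w. the (d w)"]])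
    show "{b. S b \<noteq> UNIV} \<subseteq> (\<lambda>w. the (d w)) ` {w. length w < L}"
    proof
      fix b assume "b \<in> {b. S b \<noteq> UNIV}"
      then have "\<exists>w. length w < L \<and> d w = Some b"
        unfolding S_def by (rule contrapos_pp) (auto simp: PiE_iff)
      then show "b \<in> (\<lambda>w. the (d w)) ` {w. length w < L}" by force
    qed
  qed
  show ?thesis unfolding eq ptop_def
    apply (subst openin_PiE_gen)
    using finB inner by simp
qed

lemma payoff_cont:
  fixes d :: "'c::finite list \<Rightarrow> 'a option" and P :: "'c list \<Rightarrow> 'c pmf"
    and f :: "'a \<Rightarrow> (nat \<Rightarrow> 'c) \<Rightarrow> real"
  assumes g: "continuous_map plays_topology euclideanreal (f a)"
    and b: "\<And>x. f a x \<in> {0..1}" and dl: "\<delta> > 0"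
  shows "\<exists>L. \<forall>\<sigma> \<tau> \<gamma>. (\<forall>w b. length w < L \<longrightarrow> d w = Some b \<longrightarrow> \<sigma> b w = \<tau> b w) \<longrightarrow>
           \<bar>payoff d P f \<sigma> \<gamma> a - payoff d P f \<tau> \<gamma> a\<bar> \<le> \<delta>"
proof -
  obtain L where L: "\<forall>x y. (\<forall>i<L. x i = y i) \<longrightarrow> \<bar>f a x - f a y\<bar> < \<delta>"
    using uc[OF g dl] by (rule exE)
  show ?thesis
  proof (intro exI allI impI)
    fix \<sigma> \<tau> :: "'a \<Rightarrow> 'c list \<Rightarrow> 'c" and \<gamma>
    assume ag: "\<forall>w b. length w < L \<longrightarrow> d w = Some b \<longrightarrow> \<sigma> b w = \<tau> b w"
    show "\<bar>payoff d P f \<sigma> \<gamma> a - payoff d P f \<tau> \<gamma> a\<bar> \<le> \<delta>"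
    proof (rule payoff_close[where f=f and a=a, OF g b])
      fix X
      have nm: "next_move d \<sigma> X w = next_move d \<tau> X w" if "length w < L" for w
        using ag that by (auto simp: next_move_def split: option.split)
      have "\<forall>i<L. play d \<sigma> \<gamma> X i = play d \<tau> \<gamma> X i"
        by (auto intro: play_cong nm)
      moreover have "(\<forall>i<L. play d \<sigma> \<gamma> X i = play d \<tau> \<gamma> X i) \<longrightarrow>
          \<bar>f a (play d \<sigma> \<gamma> X) - f a (play d \<tau> \<gamma> X)\<bar> < \<delta>"
        by (rule spec[OF spec[OF L]])
      ultimately have "\<bar>f a (play d \<sigma> \<gamma> X) - f a (play d \<tau> \<gamma> X)\<bar> < \<delta>" by (rule rev_mp)
      then show "\<bar>f a (play d \<sigma> \<gamma> X) - f a (play d \<tau> \<gamma> X)\<bar> \<le> \<delta>" by simp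
    qed
  qed
qed


lemma lin_aux:
  fixes A B C D e :: real
  assumes "- (C - A) \<le> (A - (B + e)) / 3" "D - B \<le> (A - (B + e)) / 3" "B + e < A"
  shows "D + e < C"
  using assms by (simp add: field_simps)

definition Cset where
  "Cset d P f n = {\<sigma>. \<forall>\<gamma> a s. to_nat a < n \<longrightarrow>
     payoff d P f (\<sigma>(a := s)) \<gamma> a \<le> payoff d P f \<sigma> \<gamma> a + 1 / real (Suc n)}"

lemma closed_C:
  fixes d :: "'c::finite list \<Rightarrow> 'a::countable option" and P :: "'c list \<Rightarrow> 'c pmf"
    and f :: "'a \<Rightarrow> (nat \<Rightarrow> 'c) \<Rightarrow> real"
  assumes cont: "\<And>a. continuous_map plays_topology euclideanreal (f a)"
    and bnd: "\<And>a x. f a x \<in> {0..1}"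
  shows "closedin ptop (Cset d P f n)"
  unfolding closedin_def
proof (intro conjI)
  show "Cset d P f n \<subseteq> topspace ptop" by simp
  show "openin ptop (topspace ptop - Cset d P f n)"
  proof (subst openin_subopen, intro ballI)
    fix \<sigma>0 assume "\<sigma>0 \<in> topspace ptop - Cset d P f n"
    then obtain \<gamma> a s where an: "to_nat a < n"
      and gt: "payoff d P f (\<sigma>0(a := s)) \<gamma> a > payoff d P f \<sigma>0 \<gamma> a + 1 / real (Suc n)"
      unfolding Cset_def by (auto simp: not_le)
    define \<delta> where "\<delta> = (payoff d P f (\<sigma>0(a := s)) \<gamma> a - (payoff d P f \<sigma>0 \<gamma> a + 1 / real (Suc n))) / 3"
    have dl: "\<delta> > 0" unfolding \<delta>_def using gt by simp
    obtain L where L: "\<forall>\<sigma> \<tau> \<gamma>. (\<forall>w b. length w < L \<longrightarrow> d w = Some b \<longrightarrow> \<sigma> b w = \<tau> b w) \<longrightarrow>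
           \<bar>payoff d P f \<sigma> \<gamma> a - payoff d P f \<tau> \<gamma> a\<bar> \<le> \<delta>"
      using payoff_cont[where P=P and d=d, OF cont bnd dl] by (rule exE)
    let ?T = "{\<sigma>. \<forall>w b. length w < L \<longrightarrow> d w = Some b \<longrightarrow> \<sigma> b w = \<sigma>0 b w}"
    have "?T \<subseteq> topspace ptop - Cset d P f n"
    proof
      fix \<sigma> assume "\<sigma> \<in> ?T"
      then have ag: "\<forall>w b. length w < L \<longrightarrow> d w = Some b \<longrightarrow> \<sigma> b w = \<sigma>0 b w" by simp
      then have ag2: "\<forall>w b. length w < L \<longrightarrow> d w = Some b \<longrightarrow> (\<sigma>(a := s)) b w = (\<sigma>0(a := s)) b w"
        by simp
      have "(\<forall>w b. length w < L \<longrightarrow> d w = Some b \<longrightarrow> \<sigma> b w = \<sigma>0 b w) \<longrightarrow>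
           \<bar>payoff d P f \<sigma> \<gamma> a - payoff d P f \<sigma>0 \<gamma> a\<bar> \<le> \<delta>"
        by (rule spec[OF spec[OF spec[OF L]]])
      from this ag have 1: "\<bar>payoff d P f \<sigma> \<gamma> a - payoff d P f \<sigma>0 \<gamma> a\<bar> \<le> \<delta>" by (rule mp)
      have "(\<forall>w b. length w < L \<longrightarrow> d w = Some b \<longrightarrow> (\<sigma>(a := s)) b w = (\<sigma>0(a := s)) b w) \<longrightarrow>
           \<bar>payoff d P f (\<sigma>(a := s)) \<gamma> a - payoff d P f (\<sigma>0(a := s)) \<gamma> a\<bar> \<le> \<delta>"
        by (rule spec[OF spec[OF spec[OF L]]])
      from this ag2 have 2: "\<bar>payoff d P f (\<sigma>(a := s)) \<gamma> a - payoff d P f (\<sigma>0(a := s)) \<gamma> a\<bar> \<le> \<delta>"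
        by (rule mp)
      have "payoff d P f (\<sigma>(a := s)) \<gamma> a > payoff d P f \<sigma> \<gamma> a + 1 / real (Suc n)"
        using abs_le_D2[OF 2] abs_le_D1[OF 1] gt unfolding \<delta>_def by (rule lin_aux)
      then show "\<sigma> \<in> topspace ptop - Cset d P f n"
        using an unfolding Cset_def by (auto simp: not_le)
    qed
    moreover have "openin ptop ?T" by (rule nbhd_open)
    moreover have "\<sigma>0 \<in> ?T" by simp
    ultimately show "\<exists>T. openin ptop T \<and> \<sigma>0 \<in> T \<and> T \<subseteq> topspace ptop - Cset d P f n" by blast
  qed
qed

lemma C_mono:
  fixes d :: "'c list \<Rightarrow> 'a::countable option" and P :: "'c list \<Rightarrow> 'c pmf"
    and f :: "'a \<Rightarrow> (nat \<Rightarrow> 'c) \<Rightarrow> real"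
  shows "n \<le> m \<Longrightarrow> Cset d P f m \<subseteq> Cset d P f n"
proof
  fix \<sigma> :: "'a \<Rightarrow> 'c list \<Rightarrow> 'c" assume nm: "n \<le> m" and s: "\<sigma> \<in> Cset d P f m"
  have le: "1 / real (Suc m) \<le> 1 / real (Suc n)" using nm by (simp add: frac_le)
  show "\<sigma> \<in> Cset d P f n" unfolding Cset_def
  proof (intro CollectI allI impI)
    fix \<gamma> :: "'c list" and a :: 'a and s assume "to_nat a < n"
    then have "to_nat a < m" using nm by simp
    then have "payoff d P f (\<sigma>(a := s)) \<gamma> a \<le> payoff d P f \<sigma> \<gamma> a + 1 / real (Suc m)"
      using s unfolding Cset_def by blast
    then show "payoff d P f (\<sigma>(a := s)) \<gamma> a \<le> payoff d P f \<sigma> \<gamma> a + 1 / real (Suc n)"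
      using le by linarith
  qed
qed

lemma C_nonempty:
  fixes d :: "'c::finite list \<Rightarrow> 'a::countable option" and P :: "'c list \<Rightarrow> 'c pmf"
    and f :: "'a \<Rightarrow> (nat \<Rightarrow> 'c) \<Rightarrow> real"
  assumes cont: "\<And>a. continuous_map plays_topology euclideanreal (f a)"
    and bnd: "\<And>a x. f a x \<in> {0..1}"
  shows "Cset d P f m \<noteq> {}"
proof -
  have fin: "finite {a :: 'a. to_nat a < m}"
    using finite_vimageI[OF finite_lessThan[of m] inj_to_nat] by (simp add: vimage_def)
  obtain \<sigma> where \<sigma>: "\<forall>\<gamma>. \<forall>a\<in>{a. to_nat a < m}. \<forall>s. payoff d P f (\<sigma>(a := s)) \<gamma> a \<le> payoff d P f \<sigma> \<gamma> a + 1 / real (Suc m)"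
    using exists_approx[where d=d and P=P and f=f, OF cont bnd fin, of "1 / real (Suc m)"] by auto
  then have "\<sigma> \<in> Cset d P f m" unfolding Cset_def by blast
  then show ?thesis by blast
qed

theorem corollary12:
  fixes d :: "'c::finite list \<Rightarrow> 'a::countable option"
    and P :: "'c list \<Rightarrow> 'c pmf"
    and f :: "'a \<Rightarrow> (nat \<Rightarrow> 'c) \<Rightarrow> real"
  assumes "\<And>a. continuous_map plays_topology euclideanreal (f a)"
    and "\<And>a x. f a x \<in> {0..1}"
  shows "\<exists>\<sigma>. subgame_perfect d P f \<sigma>"
proof -
  note cont = assms(1) and bnd = assms(2)
  let ?U = "range (Cset d P f)"
  have closed: "\<forall>C\<in>?U. closedin ptop C" using closed_C[where f=f, OF cont bnd] by blast
  have fip: "\<forall>\<F>. finite \<F> \<and> \<F> \<subseteq> ?U \<longrightarrow> \<Inter>\<F> \<noteq> {}"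
  proof (intro allI impI)
    fix \<F> assume F: "finite \<F> \<and> \<F> \<subseteq> ?U"
    obtain K where K: "finite K" "\<F> = Cset d P f ` K"
      using finite_subset_image[of \<F> "Cset d P f" UNIV] F by blast
    define m where "m = Max (insert 0 K)"
    have "Cset d P f m \<subseteq> \<Inter>\<F>"
    proof
      fix \<sigma> assume s: "\<sigma> \<in> Cset d P f m"
      have "\<sigma> \<in> Cset d P f k" if "k \<in> K" for k
      proof -
        have "k \<le> m" unfolding m_def using K(1) that by (intro Max_ge) auto
        then show ?thesis using C_mono s by blast
      qed
      then show "\<sigma> \<in> \<Inter>\<F>" using K(2) by blast
    qed
    then show "\<Inter>\<F> \<noteq> {}" using C_nonempty[where f=f and d=d and P=P and m=m, OF cont bnd] by blast
  qed
  have "\<Inter>?U \<noteq> {}"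
    using ptop_compact[unfolded compact_space_fip] closed fip by blast
  then obtain \<sigma> where \<sigma>: "\<And>n. \<sigma> \<in> Cset d P f n" by blast
  have "subgame_perfect d P f \<sigma>"
    unfolding subgame_perfect_def
  proof (intro allI notI)
    fix \<gamma> a s
    assume gt: "payoff d P f (\<sigma>(a := s)) \<gamma> a > payoff d P f \<sigma> \<gamma> a"
    define gap where "gap = payoff d P f (\<sigma>(a := s)) \<gamma> a - payoff d P f \<sigma> \<gamma> a"
    have "gap > 0" unfolding gap_def using gt by simp
    then obtain n where n: "inverse (real (Suc n)) < gap" using reals_Archimedean by blast
    define m where "m = n + Suc (to_nat a)"
    have "to_nat a < m" unfolding m_def by simp
    then have le: "payoff d P f (\<sigma>(a := s)) \<gamma> a \<le> payoff d P f \<sigma> \<gamma> a + 1 / real (Suc m)"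
      using \<sigma>[of m] unfolding Cset_def by blast
    have "1 / real (Suc m) \<le> 1 / real (Suc n)" unfolding m_def by (simp add: frac_le)
    then show False using le n unfolding gap_def by (simp add: inverse_eq_divide)
  qed
  then show ?thesis by blast
qed

end
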